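(* Let $M$ be a magma satisfying $(xy)z = xz$ and $x(yz) = xy$ for all $x,y,z\in M$. Then $M$ satisfies $xy = xz$ and $(xy)z = xy$ for all $x,y,z\in M$ if and only if $M$ avoids both magmas $M_1$ (on $\{0,1,2\}$) and $M_2$ (on $\{0,1,2,3\}$) with Cayley tables \[ \begin{array}{c|ccc} M_1 & 0 & 1 & 2 \\ \hline 0 & 0 & 2 & 0 \\ 1 & 1 & 1 & 1 \\ 2 & 0 & 2 & 0 \end{array} \qquad \begin{array}{c|cccc} M_2 & 0 & 1 & 2 & 3 \\ \hline 0 & 0 & 2 & 0 & 2 \\ 1 & 1 & 3 & 1 & 3 \\ 2 & 0 & 2 & 0 & 2 \\ 3 & 1 & 3 & 1 & 3 \end{array}. \]
   Context: A magma is a nonempty set with a binary operation, written by juxtaposition. A magma $M$ avoids a magma $F$ if no submagma of $M$ is isomorphic to $F$. In the Cayley tables, the entry in row $i$, column $j$ is $i\cdot j$. *)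

theory Defs
  imports Main
begin

definition magma :: "'a set \<Rightarrow> ('a \<Rightarrow> 'a \<Rightarrow> 'a) \<Rightarrow> bool" where
  "magma S f \<longleftrightarrow> S \<noteq> {} \<and> (\<forall>x\<in>S. \<forall>y\<in>S. f x y \<in> S)"

definition submagma :: "'a set \<Rightarrow> 'a set \<Rightarrow> ('a \<Rightarrow> 'a \<Rightarrow> 'a) \<Rightarrow> bool" where
  "submagma T S f \<longleftrightarrow> T \<noteq> {} \<and> T \<subseteq> S \<and> (\<forall>x\<in>T. \<forall>y\<in>T. f x y \<in> T)"

definition magma_iso :: "('b \<Rightarrow> 'a) \<Rightarrow> 'b set \<Rightarrow> ('b \<Rightarrow> 'b \<Rightarrow> 'b) \<Rightarrow> 'a set \<Rightarrow> ('a \<Rightarrow> 'a \<Rightarrow> 'a) \<Rightarrow> bool" where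
  "magma_iso h A g B f \<longleftrightarrow> bij_betw h A B \<and> (\<forall>x\<in>A. \<forall>y\<in>A. h (g x y) = f (h x) (h y))"

definition magma_isomorphic :: "'b set \<Rightarrow> ('b \<Rightarrow> 'b \<Rightarrow> 'b) \<Rightarrow> 'a set \<Rightarrow> ('a \<Rightarrow> 'a \<Rightarrow> 'a) \<Rightarrow> bool" where
  "magma_isomorphic A g B f \<longleftrightarrow> (\<exists>h. magma_iso h A g B f)"

definition avoids :: "'a set \<Rightarrow> ('a \<Rightarrow> 'a \<Rightarrow> 'a) \<Rightarrow> 'b set \<Rightarrow> ('b \<Rightarrow> 'b \<Rightarrow> 'b) \<Rightarrow> bool" where
  "avoids S f A g \<longleftrightarrow> \<not> (\<exists>T. submagma T S f \<and> magma_isomorphic A g T f)"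

definition M1_op :: "nat \<Rightarrow> nat \<Rightarrow> nat" where
  "M1_op i j = [[0,2,0],[1,1,1],[0,2,0]] ! i ! j"

definition M2_op :: "nat \<Rightarrow> nat \<Rightarrow> nat" where
  "M2_op i j = [[0,2,0,2],[1,3,1,3],[0,2,0,2],[1,3,1,3]] ! i ! j"

end

theory Submission
  imports Defs
begin

lemma M1_vals: "M1_op 0 0 = 0" "M1_op 0 1 = 2" "M1_op 0 2 = 0"
  "M1_op 1 0 = 1" "M1_op 1 1 = 1" "M1_op 1 2 = 1"
  "M1_op 2 0 = 0" "M1_op 2 1 = 2" "M1_op 2 2 = 0"
  by (simp_all add: M1_op_def)

lemma M2_vals: "M2_op 0 0 = 0" "M2_op 0 1 = 2" "M2_op 0 2 = 0" "M2_op 0 3 = 2"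
  "M2_op 1 0 = 1" "M2_op 1 1 = 3" "M2_op 1 2 = 1" "M2_op 1 3 = 3"
  "M2_op 2 0 = 0" "M2_op 2 1 = 2" "M2_op 2 2 = 0" "M2_op 2 3 = 2"
  "M2_op 3 0 = 1" "M2_op 3 1 = 3" "M2_op 3 2 = 1" "M2_op 3 3 = 3"
  by (simp_all add: M2_op_def)

lemma fwd1:
  assumes lc: "\<forall>x\<in>S. \<forall>y\<in>S. \<forall>z\<in>S. f x y = f x z"
  shows "avoids S f {0,1,2} M1_op"
  unfolding avoids_def
proof
  assume "\<exists>T. submagma T S f \<and> magma_isomorphic {0,1,2} M1_op T f"
  then obtain T h where T: "submagma T S f" and h: "magma_iso h {0,1,2} M1_op T f"
    unfolding magma_isomorphic_def by blast
  have bij: "bij_betw h {0,1,2::nat} T" and hom: "\<forall>x\<in>{0,1,2}. \<forall>y\<in>{0,1,2}. h (M1_op x y) = f (h x) (h y)"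
    using h unfolding magma_iso_def by auto
  have inS: "h 0 \<in> S" "h 1 \<in> S" using bij T unfolding bij_betw_def submagma_def by auto
  have "h 2 = f (h 0) (h 1)" using hom[rule_format, of 0 1] M1_vals by simp
  also have "\<dots> = f (h 0) (h 0)" using lc inS by blast
  also have "\<dots> = h 0" using hom[rule_format, of 0 0] M1_vals by simp
  finally have h20: "h 2 = h 0" .
  have inj: "inj_on h {0,1,2::nat}" using bij by (rule bij_betw_imp_inj_on)
  have "(2::nat) = 0" by (rule inj_onD[OF inj h20]) auto
  then show False by simp
qed

lemma fwd2:
  assumes lc: "\<forall>x\<in>S. \<forall>y\<in>S. \<forall>z\<in>S. f x y = f x z"
  shows "avoids S f {0,1,2,3} M2_op"
  unfolding avoids_def
proof
  assume "\<exists>T. submagma T S f \<and> magma_isomorphic {0,1,2,3} M2_op T f"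
  then obtain T h where T: "submagma T S f" and h: "magma_iso h {0,1,2,3} M2_op T f"
    unfolding magma_isomorphic_def by blast
  have bij: "bij_betw h {0,1,2,3::nat} T" and hom: "\<forall>x\<in>{0,1,2,3}. \<forall>y\<in>{0,1,2,3}. h (M2_op x y) = f (h x) (h y)"
    using h unfolding magma_iso_def by auto
  have inS: "h 0 \<in> S" "h 1 \<in> S" using bij T unfolding bij_betw_def submagma_def by auto
  have "h 2 = f (h 0) (h 1)" using hom[rule_format, of 0 1] M2_vals by simp
  also have "\<dots> = f (h 0) (h 0)" using lc inS by blast
  also have "\<dots> = h 0" using hom[rule_format, of 0 0] M2_vals by simp
  finally have h20: "h 2 = h 0" .
  have inj: "inj_on h {0,1,2,3::nat}" using bij by (rule bij_betw_imp_inj_on)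
  have "(2::nat) = 0" by (rule inj_onD[OF inj h20]) auto
  then show False by simp
qed

theorem mainTheorem16:
  fixes S :: "'a set" and f :: "'a \<Rightarrow> 'a \<Rightarrow> 'a"
  assumes "magma S f"
    and "\<forall>x\<in>S. \<forall>y\<in>S. \<forall>z\<in>S. f (f x y) z = f x z"
    and "\<forall>x\<in>S. \<forall>y\<in>S. \<forall>z\<in>S. f x (f y z) = f x y"
  shows "((\<forall>x\<in>S. \<forall>y\<in>S. \<forall>z\<in>S. f x y = f x z) \<and> (\<forall>x\<in>S. \<forall>y\<in>S. \<forall>z\<in>S. f (f x y) z = f x y))
     \<longleftrightarrow> (avoids S f {0,1,2} M1_op \<and> avoids S f {0,1,2,3} M2_op)"
proof
  assume "(\<forall>x\<in>S. \<forall>y\<in>S. \<forall>z\<in>S. f x y = f x z) \<and> (\<forall>x\<in>S. \<forall>y\<in>S. \<forall>z\<in>S. f (f x y) z = f x y)"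
  then show "avoids S f {0,1,2} M1_op \<and> avoids S f {0,1,2,3} M2_op"
    using fwd1 fwd2 by blast
next
  assume av: "avoids S f {0,1,2} M1_op \<and> avoids S f {0,1,2,3} M2_op"
  have cl: "\<And>x y. x \<in> S \<Longrightarrow> y \<in> S \<Longrightarrow> f x y \<in> S" using assms(1) unfolding magma_def by blast
  have A: "\<And>x y z. x \<in> S \<Longrightarrow> y \<in> S \<Longrightarrow> z \<in> S \<Longrightarrow> f (f x y) z = f x z" using assms(2) by blast
  have B: "\<And>x y z. x \<in> S \<Longrightarrow> y \<in> S \<Longrightarrow> z \<in> S \<Longrightarrow> f x (f y z) = f x y" using assms(3) by blast
  have lc: "\<forall>x\<in>S. \<forall>y\<in>S. \<forall>z\<in>S. f x y = f x z"
  proof (rule ccontr)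
    assume "\<not> ?thesis"
    then obtain x y z where xyz: "x \<in> S" "y \<in> S" "z \<in> S" "f x y \<noteq> f x z" by blast
    define a0 where "a0 = f x x"
    have a0S: "a0 \<in> S" using cl xyz a0_def by blast
    have "f a0 y = f x y" unfolding a0_def using A[of x x y] xyz by simp
    moreover have "f a0 z = f x z" unfolding a0_def using A[of x x z] xyz by simp
    ultimately have ne: "f a0 y \<noteq> f a0 z" using xyz(4) by simp
    have a0a0: "f a0 a0 = a0" unfolding a0_def using A[of x x "f x x"] B[of x x x] xyz cl by simp
    obtain b where bS: "b \<in> S" and ab: "f a0 b \<noteq> a0"
    proof (cases "f a0 y = a0")
      case True
      then show ?thesis using that[of z] ne xyz by simp
    next
      case False
      then show ?thesis using that[of y] xyz by simp
    qed
    define a where "a = a0"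
    define c where "c = f b b"
    define d where "d = f a c"
    define e where "e = f c a"
    have aS: "a \<in> S" using a0S a_def by simp
    have cS: "c \<in> S" using bS cl c_def by simp
    have dS: "d \<in> S" using aS cS cl d_def by simp
    have eS: "e \<in> S" using aS cS cl e_def by simp
    have aa: "f a a = a" using a0a0 a_def by simp
    have cc: "f c c = c" unfolding c_def using A[of b b "f b b"] B[of b b b] bS cl by simp
    have d_eq: "d = f a b" unfolding d_def c_def using B[of a b b] aS bS by simp
    have ad: "a \<noteq> d" using ab d_eq a_def by simp
    have da: "\<And>w. w \<in> S \<Longrightarrow> f d w = f a w" unfolding d_def using A aS cS by simp
    have ea: "\<And>w. w \<in> S \<Longrightarrow> f e w = f c w" unfolding e_def using A aS cS by simp
    have a_d: "f a d = a" unfolding d_def using B[of a a c] aS cS aa by simp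
    have a_e: "f a e = d" unfolding e_def d_def using B[of a c a] aS cS by simp
    have c_d: "f c d = e" unfolding e_def d_def using B[of c a c] aS cS by simp
    have c_e: "f c e = c" unfolding e_def using B[of c c a] aS cS cc by simp
    have acd: "f a c = d" using d_def by simp
    have cae: "f c a = e" using e_def by simp
    have ac: "a \<noteq> c"
    proof
      assume "a = c" then have "d = a" using acd aa by simp
      then show False using ad by simp
    qed
    have dc: "d \<noteq> c"
    proof
      assume h: "d = c"
      have "f d d = a" using da[OF dS] a_d by simp
      then have "a = c" using h cc by simp
      then show False using ac by simp
    qed
    show False
    proof (cases "c = e")
      case True
      define h where "h = (\<lambda>i::nat. if i = 0 then a else if i = 1 then c else d)"
      define T where "T = {a, c, d}"
      have sub: "submagma T S f" unfolding submagma_def T_def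
        using aS cS dS aa a_d da[OF aS] da[OF cS] da[OF dS] cc c_d acd cae True
        by auto
      have "bij_betw h {0,1,2} T" unfolding bij_betw_def inj_on_def T_def h_def
        using ac ad dc by auto
      moreover have "\<forall>x\<in>{0,1,2}. \<forall>y\<in>{0,1,2}. h (M1_op x y) = f (h x) (h y)"
        unfolding h_def using M1_vals aa a_d da[OF aS] da[OF cS] da[OF dS] cc c_d acd cae True
        by auto
      ultimately have "magma_isomorphic {0,1,2} M1_op T f"
        unfolding magma_isomorphic_def magma_iso_def by blast
      then show False using av sub unfolding avoids_def by blast
    next
      case False
      have ae: "a \<noteq> e"
      proof
        assume "a = e" then have "f a e = a" using aa by simp
        then show False using a_e ad by simp
      qed
      have de: "d \<noteq> e"
      proof
        assume h: "d = e"
        have "f d a = a" using da[OF aS] aa by simp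
        moreover have "f e a = e" using ea[OF aS] cae by simp
        ultimately show False using h ae by simp
      qed
      define h where "h = (\<lambda>i::nat. if i = 0 then a else if i = 1 then e else if i = 2 then d else c)"
      define T where "T = {a, e, d, c}"
      have sub: "submagma T S f" unfolding submagma_def T_def
        using aS cS dS eS aa a_d a_e acd da[OF aS] da[OF cS] da[OF dS] da[OF eS]
          ea[OF aS] ea[OF cS] ea[OF dS] ea[OF eS] cc c_d c_e cae
        by auto
      have "bij_betw h {0,1,2,3} T" unfolding bij_betw_def inj_on_def T_def h_def
        using ac ad dc ae de False by auto
      moreover have "\<forall>x\<in>{0,1,2,3}. \<forall>y\<in>{0,1,2,3}. h (M2_op x y) = f (h x) (h y)"
        unfolding h_def using M2_vals aa a_d a_e acd da[OF aS] da[OF cS] da[OF dS] da[OF eS]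
          ea[OF aS] ea[OF cS] ea[OF dS] ea[OF eS] cc c_d c_e cae
        by auto
      ultimately have "magma_isomorphic {0,1,2,3} M2_op T f"
        unfolding magma_isomorphic_def magma_iso_def by blast
      then show False using av sub unfolding avoids_def by blast
    qed
  qed
  moreover have "\<forall>x\<in>S. \<forall>y\<in>S. \<forall>z\<in>S. f (f x y) z = f x y"
    using lc A by (metis (no_types, lifting))
  ultimately show "(\<forall>x\<in>S. \<forall>y\<in>S. \<forall>z\<in>S. f x y = f x z) \<and> (\<forall>x\<in>S. \<forall>y\<in>S. \<forall>z\<in>S. f (f x y) z = f x y)"
    by blast
qed

end
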